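(* (1) If $n,m\in\mathbf N$ with $1\le m\le n$, then $$\left\langle{n\atop m}\right\rangle=\sum_{j=1}^{n-m}j\left\langle{n-j-1\atop m-1}\right\rangle^{(j+1,1)} .$$ (2) If $n,m,\nu\in\mathbf N_0$ with $0\le m\le n$ and $1\le\nu\le n-1$, then $$\left\langle{n\atop m}\right\rangle=\sum_{k=0}^{\nu}\left\langle{\nu\atop k}\right\rangle\left\langle{n-\nu\atop m-k}\right\rangle^{(\nu,k)} .$$
   Context: Euler numbers: $\left\langle{0\atop 0}\right\rangle=1$, $\left\langle{n\atop k}\right\rangle=0$ for $k<0$ or $k>n$, $\left\langle{n\atop k}\right\rangle=(n-k)\left\langle{n-1\atop k-1}\right\rangle+(k+1)\left\langle{n-1\atop k}\right\rangle$. For sequences $a=(a_j)_{j\ge1}$, $b=(b_j)_{j\ge0}$ and $\omega=(\varepsilon_1,\dots,\varepsilon_N)\in\{0,1\}^N$ let $w^{a,b}_N(\omega)=\prod_{t=1}^N g_t$ where, with $j=\#\{l<t:\varepsilon_l=0\}$, $g_t=a_{t-j}$ if $\varepsilon_t=0$ and $g_t=b_j$ if $\varepsilon_t=1$; let $\zeta_{Nk}(a,b)=\sum w^{a,b}_N(\omega)$ over $\omega$ with exactly $k$ zeros ($N\ge1$, $0\le k\le N$), $\zeta_{00}=1$, $\zeta_{Nk}=0$ if $k<0$ or $k>N$. For integers $0\le\mu\le\nu$, the associated Euler numbers of rank $(\nu,\mu)$ are $\left\langle{N\atop k}\right\rangle^{(\nu,\mu)}=\zeta_{Nk}(a,b)$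 with $a_j=\nu-\mu+j-1$ $(j\ge1)$ and $b_j=\mu+j+1$ $(j\ge0)$. *)

theory Defs
  imports Main
begin

fun eulerian :: "nat \<Rightarrow> int \<Rightarrow> nat" where
  "eulerian 0 k = (if k = 0 then 1 else 0)"
| "eulerian (Suc n) k =
     (if k < 0 \<or> k > int (Suc n) then 0
      else nat (int (Suc n) - k) * eulerian n (k - 1) + nat (k + 1) * eulerian n k)"

text \<open>Weight of a 0/1 word (False = 0, True = 1), read left to right.
  t is the (1-based) position of the next letter, j the number of zeros seen so far.\<close>
fun wt_aux :: "(nat \<Rightarrow> nat) \<Rightarrow> (nat \<Rightarrow> nat) \<Rightarrow> nat \<Rightarrow> nat \<Rightarrow> bool list \<Rightarrow> nat" where
  "wt_aux a b t j [] = 1"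
| "wt_aux a b t j (e # es) =
     (if e then b j * wt_aux a b (Suc t) j es
      else a (t - j) * wt_aux a b (Suc t) (Suc j) es)"

definition wt :: "(nat \<Rightarrow> nat) \<Rightarrow> (nat \<Rightarrow> nat) \<Rightarrow> bool list \<Rightarrow> nat" where
  "wt a b w = wt_aux a b 1 0 w"

definition zeta :: "(nat \<Rightarrow> nat) \<Rightarrow> (nat \<Rightarrow> nat) \<Rightarrow> nat \<Rightarrow> int \<Rightarrow> nat" where
  "zeta a b N k =
     (if k < 0 \<or> k > int N then 0
      else \<Sum>w \<in> {w. length w = N \<and> int (length (filter Not w)) = k}. wt a b w)"

definition assoc_eulerian :: "nat \<Rightarrow> nat \<Rightarrow> nat \<Rightarrow> int \<Rightarrow> nat" where
  "assoc_eulerian \<nu> \<mu> N k =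
     zeta (\<lambda>j. \<nu> - \<mu> + j - 1) (\<lambda>j. \<mu> + j + 1) N k"

end

theory Submission imports Defs begin

fun W :: "(nat\<Rightarrow>nat)\<Rightarrow>(nat\<Rightarrow>nat)\<Rightarrow>nat\<Rightarrow>nat\<Rightarrow>nat\<Rightarrow>nat\<Rightarrow>nat" where
  "W a b t j 0 k = (if k = 0 then 1 else 0)"
| "W a b t j (Suc N) 0 = b j * W a b (Suc t) j N 0"
| "W a b t j (Suc N) (Suc k) = b j * W a b (Suc t) j N (Suc k) + a (t - j) * W a b (Suc t) (Suc j) N k"

lemma W0: "W a b t j N 0 = b j ^ N"
  by (induction N arbitrary: t) auto

lemma Wbig: "N < k \<Longrightarrow> W a b t j N k = 0"
proof (induction N arbitrary: t j k)
  case 0 then show ?case by simp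
next
  case (Suc N) then show ?case by (cases k) auto
qed

lemma Wlast: "W a b t j (Suc N) (Suc k) = b (j + Suc k) * W a b t j N (Suc k) + a (t + N - (j + k)) * W a b t j N k"
proof (induction N arbitrary: t j k)
  case 0 then show ?case by simp
next
  case (Suc N)
  show ?case
  proof (cases k)
    case 0
    have "W a b (Suc t) j (Suc N) (Suc 0) = b (Suc j) * W a b (Suc t) j N (Suc 0) + a (Suc t + N - j) * W a b (Suc t) j N 0"
      using Suc.IH[of "Suc t" j 0] by simp
    then show ?thesis using 0 by (simp add: W0 algebra_simps)
  next
    case (Suc k')
    have h1: "W a b (Suc t) j (Suc N) (Suc k) = b (j + Suc k) * W a b (Suc t) j N (Suc k) + a (Suc t + N - (j + k)) * W a b (Suc t) j N k"
      using Suc.IH by blast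
    have h2: "W a b (Suc t) (Suc j) (Suc N) (Suc k') = b (Suc j + Suc k') * W a b (Suc t) (Suc j) N (Suc k') + a (Suc t + N - (Suc j + k')) * W a b (Suc t) (Suc j) N k'"
      using Suc.IH by blast
    show ?thesis using Suc h1 h2 by (simp add: algebra_simps)
  qed
qed

definition Lset :: "nat \<Rightarrow> nat \<Rightarrow> bool list set" where
  "Lset N k = {w. length w = N \<and> length (filter Not w) = k}"

lemma Lset_fin: "finite (Lset N k)"
proof -
  have "Lset N k \<subseteq> {w. set w \<subseteq> UNIV \<and> length w = N}" unfolding Lset_def by auto
  moreover have "finite {w::bool list. set w \<subseteq> UNIV \<and> length w = N}"
    by (rule finite_lists_length_eq) simp
  ultimately show ?thesis by (rule finite_subset)
qed

lemma Lset_0: "Lset 0 k = (if k = 0 then {[]} else {})"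
  unfolding Lset_def by auto

lemma Lset_Suc0: "Lset (Suc N) 0 = (#) True ` Lset N 0"
proof (rule set_eqI)
  fix x show "x \<in> Lset (Suc N) 0 \<longleftrightarrow> x \<in> (#) True ` Lset N 0"
    by (cases x) (auto simp: Lset_def)
qed

lemma Lset_SucSuc: "Lset (Suc N) (Suc k) = (#) True ` Lset N (Suc k) \<union> (#) False ` Lset N k"
proof (rule set_eqI)
  fix x show "x \<in> Lset (Suc N) (Suc k) \<longleftrightarrow> x \<in> (#) True ` Lset N (Suc k) \<union> (#) False ` Lset N k"
    by (cases x) (auto simp: Lset_def)
qed

lemma bridge: "(\<Sum>w \<in> Lset N k. wt_aux a b t j w) = W a b t j N k"
proof (induction N arbitrary: t j k)
  case 0 then show ?case by (simp add: Lset_0)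
next
  case (Suc N)
  show ?case
  proof (cases k)
    case 0
    have "(\<Sum>w \<in> Lset (Suc N) k. wt_aux a b t j w) = (\<Sum>w \<in> Lset N 0. wt_aux a b t j (True # w))"
      unfolding 0 Lset_Suc0 by (simp add: sum.reindex)
    also have "\<dots> = b j * W a b (Suc t) j N 0"
      using Suc.IH by (simp add: sum_distrib_left[symmetric])
    finally show ?thesis using 0 by simp
  next
    case (Suc k')
    have d: "(#) True ` Lset N (Suc k') \<inter> (#) False ` Lset N k' = {}" by auto
    have "(\<Sum>w \<in> Lset (Suc N) k. wt_aux a b t j w) = (\<Sum>w \<in> Lset N (Suc k'). wt_aux a b t j (True # w)) + (\<Sum>w \<in> Lset N k'. wt_aux a b t j (False # w))"
      unfolding Suc Lset_SucSuc
      by (subst sum.union_disjoint) (auto simp: Lset_fin sum.reindex)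
    also have "\<dots> = b j * W a b (Suc t) j N (Suc k') + a (t - j) * W a b (Suc t) (Suc j) N k'"
      using Suc.IH by (simp add: sum_distrib_left[symmetric])
    finally show ?thesis using Suc by simp
  qed
qed

lemma zetaW: "zeta a b N (int k) = W a b 1 0 N k"
proof -
  have "{w. length w = N \<and> int (length (filter Not w)) = int k} = Lset N k" unfolding Lset_def by auto
  then show ?thesis unfolding zeta_def wt_def using bridge Wbig by (auto simp: Lset_def)
qed

lemma zeta_neg: "i < 0 \<Longrightarrow> zeta a b N i = 0" unfolding zeta_def by simp


lemma eul_zero: "i < 0 \<or> i > int n \<Longrightarrow> eulerian n i = 0"
  by (cases n) auto

lemma EI_rec: "int (eulerian (Suc n) i) = (i + 1) * int (eulerian n i) + (int (Suc n) - i) * int (eulerian n (i - 1))"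
proof (cases "i < 0 \<or> i > int (Suc n)")
  case True
  then show ?thesis using eul_zero[of i n] eul_zero[of "i - 1" n] by auto
next
  case False
  then show ?thesis by (simp add: algebra_simps)
qed

definition FI :: "nat \<Rightarrow> nat \<Rightarrow> nat \<Rightarrow> int \<Rightarrow> int" where
  "FI \<nu> \<mu> N i = int (assoc_eulerian \<nu> \<mu> N i)"

lemma FI_W: "FI \<nu> \<mu> N (int k) = int (W (\<lambda>j. \<nu> - \<mu> + j - 1) (\<lambda>j. \<mu> + j + 1) 1 0 N k)"
  unfolding FI_def assoc_eulerian_def zetaW ..

lemma FI_neg: "i < 0 \<Longrightarrow> FI \<nu> \<mu> N i = 0"
  unfolding FI_def assoc_eulerian_def zeta_def by simp

lemma FI_0: "FI \<nu> \<mu> 0 i = (if i = 0 then 1 else 0)"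
proof (cases "i < 0")
  case True then show ?thesis by (simp add: FI_neg)
next
  case False
  then obtain k where "i = int k" by (metis nonneg_int_cases not_less)
  then show ?thesis by (simp add: FI_W)
qed

lemma FI_rec:
  assumes "\<mu> \<le> \<nu>"
  shows "FI \<nu> \<mu> (Suc N) i = (int \<mu> + i + 1) * FI \<nu> \<mu> N i + (int \<nu> - int \<mu> + int N + 1 - i) * FI \<nu> \<mu> N (i - 1)"
proof (cases "i < 0")
  case True then show ?thesis by (simp add: FI_neg)
next
  case False
  then obtain k where i: "i = int k" by (metis nonneg_int_cases not_less)
  show ?thesis
  proof (cases k)
    case 0
    then show ?thesis using i FI_W[of \<nu> \<mu> "Suc N" 0] FI_W[of \<nu> \<mu> N 0] by (simp add: FI_neg W0 algebra_simps)
  next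
    case (Suc k')
    have e: "i - 1 = int k'" using i Suc by simp
    show ?thesis
    proof (cases "k' \<le> N")
      case True
      then obtain d where d: "N = k' + d" using le_Suc_ex by blast
      obtain f where f: "\<nu> = \<mu> + f" using assms le_Suc_ex by blast
      show ?thesis unfolding e unfolding i Suc FI_W Wlast d f
        by (simp add: algebra_simps)
    next
      case False
      then show ?thesis unfolding e unfolding i Suc FI_W Wlast using assms
        by (simp add: Wbig)
    qed
  qed
qed

lemma Gmain:
  "int (eulerian (\<nu> + N) m) = (\<Sum>k = 0..\<nu>. int (eulerian \<nu> (int k)) * FI \<nu> k N (m - int k))"
proof (induction N arbitrary: m)
  case 0
  show ?case
  proof (cases "m < 0 \<or> m > int \<nu>")
    case True
    then have "\<And>k. k \<in> {0..\<nu>} \<Longrightarrow> int (eulerian \<nu> (int k)) * FI \<nu> k 0 (m - int k) = 0"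
      by (auto simp: FI_0)
    then have "(\<Sum>k = 0..\<nu>. int (eulerian \<nu> (int k)) * FI \<nu> k 0 (m - int k)) = 0"
      by (intro sum.neutral) blast
    then show ?thesis using True eul_zero[of m \<nu>] by simp
  next
    case False
    then obtain m' where m: "m = int m'" "m' \<le> \<nu>" by (metis nat_int nonneg_int_cases not_less of_nat_le_iff)
    have "(\<Sum>k = 0..\<nu>. int (eulerian \<nu> (int k)) * FI \<nu> k 0 (m - int k))
       = (\<Sum>k = 0..\<nu>. if k = m' then int (eulerian \<nu> (int k)) else 0)"
      by (rule sum.cong) (auto simp: FI_0 m)
    also have "\<dots> = int (eulerian \<nu> m)" using m by (simp add: sum.delta)
    finally show ?thesis by simp
  qed
next
  case (Suc N)
  have "int (eulerian (\<nu> + Suc N) m) = (m + 1) * int (eulerian (\<nu> + N) m) + (int \<nu> + int N + 1 - m) * int (eulerian (\<nu> + N) (m - 1))"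
    using EI_rec[of "\<nu> + N" m] by simp
  also have "\<dots> = (\<Sum>k = 0..\<nu>. (m + 1) * (int (eulerian \<nu> (int k)) * FI \<nu> k N (m - int k))
        + (int \<nu> + int N + 1 - m) * (int (eulerian \<nu> (int k)) * FI \<nu> k N (m - 1 - int k)))"
    unfolding Suc.IH sum.distrib sum_distrib_left ..
  also have "\<dots> = (\<Sum>k = 0..\<nu>. int (eulerian \<nu> (int k)) * FI \<nu> k (Suc N) (m - int k))"
  proof (rule sum.cong)
    fix k assume "k \<in> {0..\<nu>}"
    then have "k \<le> \<nu>" by simp
    have e: "m - int k - 1 = m - 1 - int k" by simp
    show "(m + 1) * (int (eulerian \<nu> (int k)) * FI \<nu> k N (m - int k))
        + (int \<nu> + int N + 1 - m) * (int (eulerian \<nu> (int k)) * FI \<nu> k N (m - 1 - int k))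
        = int (eulerian \<nu> (int k)) * FI \<nu> k (Suc N) (m - int k)"
      unfolding FI_rec[OF \<open>k \<le> \<nu>\<close>, of N "m - int k"] e by (simp add: algebra_simps)
  qed simp
  finally show ?case .
qed


lemma Wlead: "b 0 = 1 \<Longrightarrow> W a b t 0 N (Suc k) = (\<Sum>r<N. a (t + r) * W a b (t + r + 1) 1 (N - 1 - r) k)"
proof (induction N arbitrary: t)
  case 0 then show ?case by simp
next
  case (Suc N)
  have "W a b t 0 (Suc N) (Suc k) = W a b (Suc t) 0 N (Suc k) + a t * W a b (Suc t) 1 N k"
    using Suc.prems by simp
  also have "\<dots> = (\<Sum>r<Suc N. a (t + r) * W a b (t + r + 1) 1 (Suc N - 1 - r) k)"
    unfolding sum.lessThan_Suc_shift Suc.IH[OF Suc.prems] by simp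
  finally show ?case .
qed

lemma Wshift: "j \<le> t \<Longrightarrow> u \<le> s \<Longrightarrow> W a b (t + s) (j + u) N k = W (\<lambda>i. a (i + (s - u))) (\<lambda>i. b (i + u)) t j N k"
proof (induction N arbitrary: t j k)
  case 0 then show ?case by simp
next
  case (Suc N)
  have i1: "W a b (Suc t + s) (j + u) N k' = W (\<lambda>i. a (i + (s - u))) (\<lambda>i. b (i + u)) (Suc t) j N k'" for k'
    using Suc.IH[of j "Suc t" k'] Suc.prems by simp
  have i2: "W a b (Suc t + s) (Suc j + u) N k' = W (\<lambda>i. a (i + (s - u))) (\<lambda>i. b (i + u)) (Suc t) (Suc j) N k'" for k'
    using Suc.IH[of "Suc j" "Suc t" k'] Suc.prems by simp
  have e: "t + s - (j + u) = t - j + (s - u)" using Suc.prems by simp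
  show ?case
    using i1 i2 e by (cases k) (simp_all add: add.commute)
qed

lemma part2:
  assumes "m \<le> n" "1 \<le> \<nu>" "\<nu> \<le> n - 1"
  shows "eulerian n (int m) = (\<Sum>k = 0..\<nu>. eulerian \<nu> (int k) * assoc_eulerian \<nu> k (n - \<nu>) (int m - int k))"
proof -
  have n: "\<nu> + (n - \<nu>) = n" using assms by simp
  have "int (eulerian n (int m)) = int (\<Sum>k = 0..\<nu>. eulerian \<nu> (int k) * assoc_eulerian \<nu> k (n - \<nu>) (int m - int k))"
    using Gmain[of \<nu> "n - \<nu>" "int m"] unfolding n by (simp add: FI_def)
  then show ?thesis by (simp only: of_nat_eq_iff)
qed

lemma part1:
  assumes "1 \<le> m" "m \<le> n"
  shows "eulerian n (int m) = (\<Sum>j = 1..n - m. j * assoc_eulerian (j + 1) 1 (n - j - 1) (int m - 1))"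
proof (cases "n = 1")
  case True
  then have "m = 1" using assms by simp
  then show ?thesis using True by simp
next
  case False
  then have n2: "n \<ge> 2" using assms by simp
  obtain k where mk: "m = Suc k" using assms by (cases m) auto
  define a :: "nat \<Rightarrow> nat" where "a = (\<lambda>j. 1 - 0 + j - 1)"
  define b :: "nat \<Rightarrow> nat" where "b = (\<lambda>j. 0 + j + 1)"
  have n: "1 + (n - 1) = n" using n2 by simp
  have "int (eulerian n (int m)) = (\<Sum>k = 0..1. int (eulerian 1 (int k)) * FI 1 k (n - 1) (int m - int k))"
    using Gmain[of 1 "n - 1" "int m"] unfolding n .
  also have "\<dots> = FI 1 0 (n - 1) (int m)"
    by (simp add: numeral_2_eq_2)
  finally have "eulerian n (int m) = W a b 1 0 (n - 1) m"
    unfolding FI_W a_def b_def by simp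
  also have "\<dots> = (\<Sum>r<n - 1. a (1 + r) * W a b (1 + r + 1) 1 (n - 1 - 1 - r) k)"
    unfolding mk by (rule Wlead) (simp add: b_def)
  also have "\<dots> = (\<Sum>r<n - 1. (r + 1) * assoc_eulerian (r + 2) 1 (n - Suc r - 1) (int k))"
  proof (rule sum.cong)
    fix r assume "r \<in> {..<n - 1}"
    have "W a b (1 + (r + 1)) (0 + 1) (n - 1 - 1 - r) k = W (\<lambda>i. a (i + (r + 1 - 1))) (\<lambda>i. b (i + 1)) 1 0 (n - 1 - 1 - r) k"
      by (rule Wshift) simp_all
    moreover have "(\<lambda>i. a (i + (r + 1 - 1))) = (\<lambda>j. r + 2 - 1 + j - 1)" by (auto simp: a_def)
    moreover have "(\<lambda>i. b (i + 1)) = (\<lambda>j. 1 + j + 1)" by (auto simp: b_def)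
    ultimately show "a (1 + r) * W a b (1 + r + 1) 1 (n - 1 - 1 - r) k = (r + 1) * assoc_eulerian (r + 2) 1 (n - Suc r - 1) (int k)"
      unfolding assoc_eulerian_def zetaW by (simp add: a_def)
  qed simp
  also have "\<dots> = (\<Sum>j = 1..n - 1. j * assoc_eulerian (j + 1) 1 (n - j - 1) (int k))"
    by (simp add: sum.atLeast1_atMost_eq)
  also have "\<dots> = (\<Sum>j = 1..n - m. j * assoc_eulerian (j + 1) 1 (n - j - 1) (int k))"
  proof (rule sum.mono_neutral_right)
    show "\<forall>j\<in>{1..n - 1} - {1..n - m}. j * assoc_eulerian (j + 1) 1 (n - j - 1) (int k) = 0"
      using mk by (auto simp: assoc_eulerian_def zetaW Wbig)
  qed (use assms in auto)
  finally show ?thesis using mk by simp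
qed

theorem theorem6p4:
  shows "(\<forall>n m :: nat. 1 \<le> m \<and> m \<le> n \<longrightarrow>
           eulerian n (int m) =
             (\<Sum>j = 1..n - m. j * assoc_eulerian (j + 1) 1 (n - j - 1) (int m - 1))) \<and>
         (\<forall>n m \<nu> :: nat. m \<le> n \<and> 1 \<le> \<nu> \<and> \<nu> \<le> n - 1 \<longrightarrow>
           eulerian n (int m) =
             (\<Sum>k = 0..\<nu>. eulerian \<nu> (int k) * assoc_eulerian \<nu> k (n - \<nu>) (int m - int k)))"
  using part1 part2 by blast

end
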